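(* Let $p$ be a positive integer with $\tau(p)>m$, and fix $b\in\mathbb{R}^m$ and $C\in\mathbb{S}^n$ with $\operatorname{rank}C>n-p$. Then for a generic $\mathcal{A}$, i.e. for all $(A_1,\dots,A_m)\in(\mathbb{S}^n)^m$ outside a Lebesgue measure zero set, the following holds: if $\mathscr{X}$ is nonempty and $\min_{X\in\mathscr{X}}C\bullet X$ is attained, then problem (BM) has no spurious 2-critical points.
   Context: Let $\mathbb{S}^n$ be the space of real symmetric $n\times n$ matrices, with inner product $A\bullet B=\operatorname{trace}(A^TB)$ (also used for $A\in\mathbb{S}^n$, $B\in\mathbb{R}^{n\times n}$), and $\mathbb{S}^n_+$ the cone of positive semidefinite matrices. Let $m=m_1+m_2$, $A_1,\dots,A_m\in\mathbb{S}^n$, $\mathcal{A}^*(\lambda)=\sum_i\lambda_iA_i$. Let $\mathscr{X}=\{X\in\mathbb{S}^n_+ : A_i\bullet X=b_i \ (i\le m_1),\ A_i\bullet X\ge b_i\ (m_1<i\le m)\}$. Problem (BM) is $\min_{Y\in\mathbb{R}^{n\times p}} C\bullet YY^T$ subject to $YY^T\in\mathscr{X}$. For $Y$, let $I(Y)=\{i: A_i\bullet YY^T=b_i\}$ and $S(\lambda)=C-\mathcal{A}^*(\lambda)$. A point $Y$ is 2-critical for (BM) if $YY^T\in\mathscr{X}$ and there is $\lambda\in\mathbb{R}^{m_1}\times\mathbb{R}^{m_2}_+$ with $\lambda_i=0$ for $i\notin I(Y)$, $S(\lambda)Y=0$, and $S(\lambda)\bullet UU^T\ge 0$ for all $U\in\mathbb{R}^{n\times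 p}$ with $A_i\bullet UY^T=0$ for all $i\in I(Y)$. A critical point is spurious if it is not a global minimizer of (BM). $\tau(k)=\binom{k+1}{2}$. *)

theory Defs
  imports "HOL-Analysis.Analysis"
begin

(* Frobenius inner product  A \<bullet> B = trace (A^T B)  for (not necessarily square) matrices *)
definition frob :: "real^'p^'n \<Rightarrow> real^'p^'n \<Rightarrow> real" where
  "frob A B = trace (transpose A ** B)"

definition symmetric_mat :: "real^'n^'n \<Rightarrow> bool" where
  "symmetric_mat X \<longleftrightarrow> transpose X = X"

(* positive semidefinite (symmetric) matrices *)
definition psd :: "real^'n^'n \<Rightarrow> bool" where
  "psd X \<longleftrightarrow> symmetric_mat X \<and> (\<forall>v. v \<bullet> (X *v v) \<ge> 0)"

(* symmetrization; used to parametrize the space S^n of symmetric matrices *)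
definition symz :: "real^'n^'n \<Rightarrow> real^'n^'n" where
  "symz M = (1/2) *\<^sub>R (M + transpose M)"

(* tau(k) = binomial(k+1, 2) *)
definition tau :: "nat \<Rightarrow> nat" where
  "tau k = (k + 1) choose 2"

(* Feasible set; E is the set of equality-constraint indices, the others are \<ge> constraints *)
definition feas :: "('m \<Rightarrow> real^'n^'n) \<Rightarrow> real^'m \<Rightarrow> 'm set \<Rightarrow> (real^'n^'n) set" where
  "feas A b E = {X. psd X \<and> (\<forall>i\<in>E. frob (A i) X = b $ i) \<and> (\<forall>i. i \<notin> E \<longrightarrow> frob (A i) X \<ge> b $ i)}"

definition active :: "('m \<Rightarrow> real^'n^'n) \<Rightarrow> real^'m \<Rightarrow> real^'p^'n \<Rightarrow> 'm set" where
  "active A b Y = {i. frob (A i) (Y ** transpose Y) = b $ i}"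

definition Smat :: "real^'n^'n \<Rightarrow> ('m::finite \<Rightarrow> real^'n^'n) \<Rightarrow> real^'m \<Rightarrow> real^'n^'n" where
  "Smat C A lam = C - (\<Sum>i\<in>UNIV. (lam $ i) *\<^sub>R A i)"

definition two_critical ::
  "real^'n^'n \<Rightarrow> ('m::finite \<Rightarrow> real^'n^'n) \<Rightarrow> real^'m \<Rightarrow> 'm set \<Rightarrow> real^'p^'n \<Rightarrow> bool" where
  "two_critical C A b E Y \<longleftrightarrow>
     Y ** transpose Y \<in> feas A b E \<and>
     (\<exists>lam::real^'m.
        (\<forall>i. i \<notin> E \<longrightarrow> lam $ i \<ge> 0) \<and>
        (\<forall>i. i \<notin> active A b Y \<longrightarrow> lam $ i = 0) \<and>
        Smat C A lam ** Y = 0 \<and>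
        (\<forall>U::real^'p^'n. (\<forall>i\<in>active A b Y. frob (A i) (U ** transpose Y) = 0)
            \<longrightarrow> frob (Smat C A lam) (U ** transpose U) \<ge> 0))"

definition BM_global_min ::
  "real^'n^'n \<Rightarrow> ('m \<Rightarrow> real^'n^'n) \<Rightarrow> real^'m \<Rightarrow> 'm set \<Rightarrow> real^'p^'n \<Rightarrow> bool" where
  "BM_global_min C A b E Y \<longleftrightarrow>
     Y ** transpose Y \<in> feas A b E \<and>
     (\<forall>Y'::real^'p^'n. Y' ** transpose Y' \<in> feas A b E \<longrightarrow>
         frob C (Y ** transpose Y) \<le> frob C (Y' ** transpose Y'))"

end

theory Submission
  imports Defs
begin

lemma sum3_swap:
  "(\<Sum>i\<in>A. \<Sum>j\<in>B. \<Sum>a\<in>D. f i j a) = (\<Sum>j\<in>B. \<Sum>a\<in>D. \<Sum>i\<in>A. f i j a)"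
proof -
  have "(\<Sum>i\<in>A. \<Sum>j\<in>B. \<Sum>a\<in>D. f i j a) = (\<Sum>j\<in>B. \<Sum>i\<in>A. \<Sum>a\<in>D. f i j a)"
    by (rule sum.swap)
  also have "\<dots> = (\<Sum>j\<in>B. \<Sum>a\<in>D. \<Sum>i\<in>A. f i j a)"
    by (rule sum.cong[OF refl], rule sum.swap)
  finally show ?thesis .
qed

lemma frob_col:
  fixes S :: "real^'n^'n" and Y :: "real^'p^'n"
  shows "frob S (Y ** transpose Y) = (\<Sum>k\<in>UNIV. column k Y \<bullet> (S *v column k Y))"
  unfolding frob_def trace_def matrix_matrix_mult_def transpose_def column_def
    inner_vec_def matrix_vector_mult_def
  apply (simp add: sum_distrib_left sum_distrib_right)
  apply (subst sum3_swap)
  apply (rule trans[OF sum.swap])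
  by (simp add: algebra_simps)

lemma frob_diff: "frob (A - B) X = frob A X - frob B X"
  unfolding frob_def trace_def matrix_matrix_mult_def transpose_def
  by (simp add: algebra_simps sum_subtractf)

lemma frob_sum: "finite I \<Longrightarrow> frob (\<Sum>i\<in>I. f i) X = (\<Sum>i\<in>I. frob (f i) X)"
  by (induction I rule: finite_induct)
     (auto simp: frob_def trace_def matrix_matrix_mult_def transpose_def algebra_simps sum.distrib sum_distrib_left sum_distrib_right)

lemma frob_scale: "frob (c *\<^sub>R A) X = c * frob A X"
  unfolding frob_def trace_def matrix_matrix_mult_def transpose_def
  by (simp add: sum_distrib_left mult.assoc)

lemma mv_column: "S *v column k Y = column k (S ** Y)"
  by (simp add: column_def matrix_vector_mult_def matrix_matrix_mult_def vec_eq_iff)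

lemma frob_expand:
  fixes C :: "real^'n^'n" and A :: "'m::finite \<Rightarrow> real^'n^'n"
  shows "frob (Smat C A lam) X = frob C X - (\<Sum>i\<in>UNIV. lam $ i * frob (A i) X)"
  unfolding Smat_def by (simp add: frob_diff frob_sum frob_scale)

lemma crit_structure:
  fixes C :: "real^'n^'n" and A :: "'m::finite \<Rightarrow> real^'n^'n" and Y :: "real^'p^'n"
  assumes tc: "two_critical C A b E Y" and nm: "\<not> BM_global_min C A b E Y"
  shows "\<exists>lam. Smat C A lam ** Y = 0 \<and> (\<forall>e. Y *v e = 0 \<longrightarrow> e = 0)"
proof -
  from tc have feasY: "Y ** transpose Y \<in> feas A b E" unfolding two_critical_def by blast
  from tc obtain lam :: "real^'m" where
    l1: "\<forall>i. i \<notin> E \<longrightarrow> lam $ i \<ge> 0" and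
    l2: "\<forall>i. i \<notin> active A b Y \<longrightarrow> lam $ i = 0" and
    l3: "Smat C A lam ** Y = 0" and
    l4: "\<forall>U::real^'p^'n. (\<forall>i\<in>active A b Y. frob (A i) (U ** transpose Y) = 0)
            \<longrightarrow> frob (Smat C A lam) (U ** transpose U) \<ge> 0"
    unfolding two_critical_def by blast
  define S where "S = Smat C A lam"
  have inj: "\<forall>e. Y *v e = 0 \<longrightarrow> e = 0"
  proof (rule ccontr)
    assume "\<not> (\<forall>e. Y *v e = 0 \<longrightarrow> e = 0)"
    then obtain e where e0: "e \<noteq> 0" and Ye: "Y *v e = 0" by blast
    have psdS: "v \<bullet> (S *v v) \<ge> 0" for v
    proof -
      define U :: "real^'p^'n" where "U = (\<chi> j k. v $ j * e $ k)"
      have "U ** transpose Y = 0"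
      proof -
        have "(U ** transpose Y) $ j $ l = v $ j * (Y *v e) $ l" for j l
          by (auto simp add: U_def matrix_matrix_mult_def matrix_vector_mult_def transpose_def
              sum_distrib_left mult.assoc mult.left_commute intro!: sum.cong)
        then show ?thesis using Ye by (simp add: vec_eq_iff)
      qed
      then have "frob S (U ** transpose U) \<ge> 0" using l4 unfolding S_def
        by (simp add: frob_def trace_def)
      moreover have "frob S (U ** transpose U) = (\<Sum>k\<in>UNIV. (e $ k)^2) * (v \<bullet> (S *v v))"
      proof -
        have "column k U = e $ k *\<^sub>R v" for k
          by (simp add: U_def column_def vec_eq_iff mult.commute)
        moreover have "S *v (c *\<^sub>R w) = c *\<^sub>R (S *v w)" for c w
          by (simp add: vec_eq_iff matrix_vector_mult_def sum_distrib_left algebra_simps)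
        ultimately show ?thesis
          by (simp add: frob_col sum_distrib_left power2_eq_square algebra_simps del: scaleR_matrix_vector_assoc)
      qed
      moreover have "(\<Sum>k\<in>UNIV. (e $ k)^2) > 0"
      proof -
        obtain k where "e $ k \<noteq> 0" using e0 by (auto simp: vec_eq_iff)
        then have "(e $ k)^2 > 0" by simp
        moreover have "(e $ k)^2 \<le> (\<Sum>k\<in>UNIV. (e $ k)^2)"
          by (rule member_le_sum) auto
        ultimately show ?thesis by linarith
      qed
      ultimately show ?thesis by (simp add: zero_le_mult_iff)
    qed
    have "BM_global_min C A b E Y"
      unfolding BM_global_min_def
    proof (intro conjI allI impI feasY)
      fix Y' :: "real^'p^'n"
      assume f': "Y' ** transpose Y' \<in> feas A b E"
      have s0: "frob S (Y ** transpose Y) = 0"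
      proof -
        have "column k (0::real^'p^'n) = 0" for k by (simp add: column_def vec_eq_iff)
        then show ?thesis using l3 by (simp add: frob_col mv_column S_def)
      qed
      have s1: "frob S (Y' ** transpose Y') \<ge> 0"
        by (simp add: frob_col psdS sum_nonneg)
      have a0: "(\<Sum>i\<in>UNIV. lam $ i * frob (A i) (Y ** transpose Y)) = (\<Sum>i\<in>UNIV. lam $ i * b $ i)"
        using l2 by (intro sum.cong) (auto simp: active_def)
      have a1: "(\<Sum>i\<in>UNIV. lam $ i * frob (A i) (Y' ** transpose Y')) \<ge> (\<Sum>i\<in>UNIV. lam $ i * b $ i)"
      proof (rule sum_mono)
        fix i
        show "lam $ i * b $ i \<le> lam $ i * frob (A i) (Y' ** transpose Y')"
        proof (cases "i \<in> E")
          case True then show ?thesis using f' by (simp add: feas_def)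
        next
          case False then show ?thesis using f' l1 by (simp add: feas_def mult_left_mono)
        qed
      qed
      show "frob C (Y ** transpose Y) \<le> frob C (Y' ** transpose Y')"
        using s0 s1 a0 a1 frob_expand[of C A lam "Y ** transpose Y"] frob_expand[of C A lam "Y' ** transpose Y'"]
        unfolding S_def by linarith
    qed
    with nm show False by blast
  qed
  show ?thesis using l3 inj by blast
qed

lemma rank_kernel_bound:
  fixes C :: "real^'n^'n" and Y :: "real^'p^'n"
  assumes inj: "\<forall>e. Y *v e = 0 \<longrightarrow> e = 0" and CY: "C ** Y = 0"
  shows "rank C + CARD('p) \<le> CARD('n)"
proof -
  let ?R = "range (\<lambda>x. Y *v x)"
  have injY: "inj ((*v) Y)"
    using inj by (metis (no_types, lifting) injI matrix_vector_mult_diff_distrib right_minus_eq)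
  have dR: "dim ?R = CARD('p)"
    using injY by (simp add: full_rank_injective[symmetric] rank_dim_range)
  have subR: "subspace ?R"
    by (rule linear_subspace_image) (auto simp: subspace_UNIV)
  have ortho: "dim {y \<in> UNIV. \<forall>x \<in> ?R. orthogonal x y} + dim ?R = dim (UNIV :: (real^'n) set)"
    by (rule dim_subspace_orthogonal_to_vectors) (auto simp: subR)
  have "orthogonal (Y *v x) r" if rC: "r \<in> rows C" for r x
  proof -
    obtain i where r: "r = row i C" using rC unfolding rows_def by blast
    have "(C *v (Y *v x)) $ i = 0" using CY by (simp add: matrix_vector_mul_assoc)
    then show "orthogonal (Y *v x) r"
      by (simp add: r orthogonal_def matrix_vector_mul_component row_def inner_commute)
  qed
  then have "rows C \<subseteq> {y \<in> UNIV. \<forall>x \<in> ?R. orthogonal x y}" by blast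
  then have "rank C \<le> dim {y \<in> UNIV. \<forall>x \<in> ?R. orthogonal x y}"
    by (simp add: row_rank_def dim_subset)
  then show ?thesis using ortho dR by simp
qed

lemma row_eq_nth: "row i A = A $ i"
  by (simp add: row_def vec_eq_iff)

lemma chart_exists:
  fixes Y :: "real^'p^'n"
  assumes inj: "\<forall>e. Y *v e = 0 \<longrightarrow> e = 0"
  shows "\<exists>\<sigma>::'p\<Rightarrow>'n. inj \<sigma> \<and> invertible (\<chi> k. Y $ \<sigma> k)"
proof -
  have "\<exists>B. B ** Y = mat 1" using inj matrix_left_invertible_ker by blast
  then have spanR: "span (rows Y) = UNIV" using matrix_left_invertible_span_rows by blast
  obtain B where BR: "B \<subseteq> rows Y" and indB: "independent B" and RB: "rows Y \<subseteq> span B"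
    by (rule maximal_independent_subset)
  have spanB: "span B = UNIV"
    using spanR RB by (metis top.extremum_uniqueI span_mono span_span)
  have finB: "finite B" using indB independent_bound by blast
  have "card B = dim B" using indB by (simp add: dim_eq_card_independent)
  also have "\<dots> = dim (span B)" by simp
  also have "\<dots> = CARD('p)" using spanB by simp
  finally have cB: "card B = CARD('p)" .
  obtain f where f: "bij_betw f (UNIV::'p set) B"
    using finite_same_card_bij[of "UNIV::'p set" B] finB cB by auto
  have fB: "f k \<in> rows Y" for k using f BR by (auto simp: bij_betw_def)
  define \<sigma> where "\<sigma> k = (SOME j. Y $ j = f k)" for k
  have s: "Y $ \<sigma> k = f k" for k
  proof -
    obtain j where "f k = row j Y" using fB[of k] unfolding rows_def by blast
    then have "\<exists>j. Y $ j = f k" by (auto simp: row_eq_nth)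
    then show ?thesis unfolding \<sigma>_def by (rule someI_ex)
  qed
  have injs: "inj \<sigma>"
  proof (rule injI)
    fix x y assume "\<sigma> x = \<sigma> y"
    then have "f x = f y" using s by metis
    then show "x = y" using f by (auto simp: bij_betw_def inj_on_def)
  qed
  define G :: "real^'p^'p" where "G = (\<chi> k. Y $ \<sigma> k)"
  have "rows G = B"
    using f unfolding rows_def G_def by (auto simp: row_eq_nth s bij_betw_def)
  then have "span (rows G) = UNIV" using spanB by simp
  then have "\<exists>B'. B' ** G = mat 1" using matrix_left_invertible_span_rows by blast
  then have "invertible G" using invertible_left_inverse by blast
  then show ?thesis using injs G_def by blast
qed

lemma mm_add_r: "((A::real^'n^'m) + B) ** C = A ** C + B ** C"
  by (simp add: matrix_matrix_mult_def vec_eq_iff sum.distrib algebra_simps)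
lemma mm_diff_r: "((A::real^'n^'m) - B) ** C = A ** C - B ** C"
  by (simp add: matrix_matrix_mult_def vec_eq_iff sum_subtractf algebra_simps)
lemma mm_diff_l: "(A::real^'n^'m) ** (B - C) = A ** B - A ** C"
  by (simp add: matrix_matrix_mult_def vec_eq_iff sum_subtractf algebra_simps)
lemma transpose_add: "transpose ((A::real^'n^'m) + B) = transpose A + transpose B"
  by (simp add: transpose_def vec_eq_iff)
lemma transpose_diff: "transpose ((A::real^'n^'m) - B) = transpose A - transpose B"
  by (simp add: transpose_def vec_eq_iff)

definition Emat :: "('p \<Rightarrow> 'n) \<Rightarrow> real^'p^'n" where
  "Emat \<sigma> = (\<chi> j k. if j = \<sigma> k then 1 else 0)"
definition Pim :: "('p \<Rightarrow> 'n) \<Rightarrow> real^'n^'n" where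
  "Pim \<sigma> = (\<chi> j l. if j = l \<and> j \<notin> range \<sigma> then 1 else 0)"

lemma EtE: "inj \<sigma> \<Longrightarrow> transpose (Emat \<sigma>) ** Emat \<sigma> = mat 1"
proof -
  assume inj: "inj \<sigma>"
  have "(transpose (Emat \<sigma>) ** Emat \<sigma>) $ k $ l = (\<Sum>j\<in>UNIV. if j = \<sigma> k then (if k = l then 1 else 0) else 0)" for k l
    unfolding Emat_def transpose_def matrix_matrix_mult_def
    apply (simp only: vec_lambda_beta)
    apply (intro sum.cong refl)
    by (auto simp: inj_eq[OF inj])
  then show ?thesis by (simp add: mat_def vec_eq_iff)
qed

lemma PE: "Pim \<sigma> ** Emat \<sigma> = 0"
  unfolding Emat_def Pim_def matrix_matrix_mult_def
  by (auto simp: vec_eq_iff intro!: sum.neutral)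

lemma Pt: "transpose (Pim \<sigma>) = Pim \<sigma>"
  by (auto simp: Pim_def transpose_def vec_eq_iff)

lemma PP: "Pim \<sigma> ** Pim \<sigma> = Pim \<sigma>"
proof -
  have "(Pim \<sigma> ** Pim \<sigma>) $ j $ l = (\<Sum>i\<in>UNIV. if i = j then (if j = l \<and> j \<notin> range \<sigma> then 1 else 0) else 0)" for j l
    unfolding Pim_def matrix_matrix_mult_def
    apply (simp only: vec_lambda_beta)
    apply (intro sum.cong refl)
    by auto
  then show ?thesis by (simp add: Pim_def vec_eq_iff)
qed

lemma EtP:
  fixes \<sigma> :: "'p::finite \<Rightarrow> 'n::finite"
  shows "transpose (Emat \<sigma>) ** Pim \<sigma> = 0"
proof -
  have "transpose (Emat \<sigma>) ** Pim \<sigma> = transpose (Pim \<sigma> ** Emat \<sigma>)"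
    by (simp add: matrix_transpose_mul Pt)
  also have "\<dots> = transpose (0::real^'p^'n)" by (simp only: PE)
  also have "\<dots> = 0" by (simp add: transpose_def vec_eq_iff)
  finally show ?thesis .
qed

lemma PEE: "inj \<sigma> \<Longrightarrow> Pim \<sigma> + Emat \<sigma> ** transpose (Emat \<sigma>) = mat 1"
proof -
  assume inj: "inj \<sigma>"
  have "(Emat \<sigma> ** transpose (Emat \<sigma>)) $ j $ l = (if j = l \<and> j \<in> range \<sigma> then 1 else 0)" for j l
  proof (cases "j \<in> range \<sigma>")
    case True
    then obtain k where k: "j = \<sigma> k" by auto
    have "(Emat \<sigma> ** transpose (Emat \<sigma>)) $ j $ l = (\<Sum>k'\<in>UNIV. (if k' = k then 1 else 0) * (if l = \<sigma> k' then 1 else 0))"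
      by (auto simp: Emat_def transpose_def matrix_matrix_mult_def k inj_eq[OF inj] intro!: sum.cong)
    also have "\<dots> = (\<Sum>k'\<in>UNIV. if k' = k then (if l = \<sigma> k then 1 else 0) else 0)"
      by (rule sum.cong) auto
    also have "\<dots> = (if l = \<sigma> k then 1 else 0)"
      by simp
    finally show ?thesis using k by auto
  next
    case False
    then show ?thesis
      by (auto simp: Emat_def transpose_def matrix_matrix_mult_def intro!: sum.neutral)
  qed
  then show ?thesis
    by (auto simp: Pim_def mat_def vec_eq_iff)
qed

definition solveS :: "('p \<Rightarrow> 'n) \<Rightarrow> real^'n^'n \<Rightarrow> real^'p^'n \<Rightarrow> real^'p^'n \<Rightarrow> real^'n^'n" where
  "solveS \<sigma> B K Z =
     (let E = Emat \<sigma>; W = Pim \<sigma> ** Z - B ** K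
      in B + W ** transpose E + E ** transpose W
           + E ** ((transpose E ** Z - transpose W ** K) ** transpose E))"

lemma solve_unique:
  fixes S :: "real^'n^'n" and K :: "real^'p^'n" and \<sigma> :: "'p \<Rightarrow> 'n"
  assumes inj: "inj \<sigma>" and sym: "transpose S = S" and PK: "Pim \<sigma> ** K = K"
  shows "solveS \<sigma> (Pim \<sigma> ** S ** Pim \<sigma>) K (S ** (Emat \<sigma> + K)) = S"
proof -
  let ?P = "Pim \<sigma>" and ?E = "Emat \<sigma>" and ?Et = "transpose (Emat \<sigma>)"
  have W: "?P ** (S ** (?E + K)) - (?P ** S ** ?P) ** K = ?P ** S ** ?E"
  proof -
    have "(?P ** S ** ?P) ** K = ?P ** S ** (?P ** K)"
      by (simp only: matrix_mul_assoc)
    then have "(?P ** S ** ?P) ** K = ?P ** S ** K" by (simp only: PK)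
    then show ?thesis by (simp add: matrix_add_ldistrib matrix_mul_assoc)
  qed
  have Wt: "transpose (?P ** S ** ?E) = ?Et ** S ** ?P"
    by (simp add: matrix_transpose_mul sym Pt matrix_mul_assoc)
  have I: "?Et ** (S ** (?E + K)) - (?Et ** S ** ?P) ** K = ?Et ** S ** ?E"
  proof -
    have "(?Et ** S ** ?P) ** K = ?Et ** S ** (?P ** K)"
      by (simp only: matrix_mul_assoc)
    then have "(?Et ** S ** ?P) ** K = ?Et ** S ** K" by (simp only: PK)
    then show ?thesis by (simp add: matrix_add_ldistrib matrix_mul_assoc)
  qed
  have "solveS \<sigma> (?P ** S ** ?P) K (S ** (?E + K)) =
        ?P ** S ** ?P + ?P ** S ** ?E ** ?Et + ?E ** ?Et ** S ** ?P + ?E ** ?Et ** S ** ?E ** ?Et"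
    unfolding solveS_def Let_def W Wt I by (simp add: matrix_mul_assoc)
  also have "\<dots> = (?P + ?E ** ?Et) ** S ** (?P + ?E ** ?Et)"
    by (simp only: mm_add_r matrix_add_ldistrib matrix_mul_assoc add_ac)
  also have "\<dots> = S" using PEE[OF inj] by simp
  finally show ?thesis .
qed

definition upair :: "'a \<times> 'a \<Rightarrow> 'a set" where "upair x = {fst x, snd x}"

lemma card_upairs: "card (range (upair :: ('p::finite \<times> 'p) \<Rightarrow> 'p set)) = tau CARD('p)"
proof -
  have eq: "range (upair :: ('p \<times> 'p) \<Rightarrow> 'p set) =
        {B. B \<subseteq> (UNIV::'p set) \<and> card B = 1} \<union> {B. B \<subseteq> (UNIV::'p set) \<and> card B = 2}"
  proof (intro set_eqI iffI)
    fix A assume "A \<in> range (upair :: ('p \<times> 'p) \<Rightarrow> 'p set)"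
    then obtain a b :: 'p where "A = {a, b}" by (auto simp: upair_def)
    then show "A \<in> {B. B \<subseteq> UNIV \<and> card B = 1} \<union> {B. B \<subseteq> UNIV \<and> card B = 2}"
      by (auto simp: card_insert_if)
  next
    fix A assume "A \<in> {B. B \<subseteq> (UNIV::'p set) \<and> card B = 1} \<union> {B. B \<subseteq> UNIV \<and> card B = 2}"
    then have "(\<exists>a. A = {a}) \<or> (\<exists>a b. A = {a, b})"
      by (auto simp: card_1_singleton_iff card_2_iff)
    then show "A \<in> range (upair :: ('p \<times> 'p) \<Rightarrow> 'p set)"
      by (auto simp: upair_def image_def) (metis fst_conv snd_conv insert_absorb2)?
  qed
  have "card (range (upair :: ('p \<times> 'p) \<Rightarrow> 'p set)) =
        card {B. B \<subseteq> (UNIV::'p set) \<and> card B = 1} + card {B. B \<subseteq> (UNIV::'p set) \<and> card B = 2}"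
    unfolding eq by (rule card_Un_disjoint) auto
  also have "\<dots> = (CARD('p) choose 1) + (CARD('p) choose 2)"
    using n_subsets[of "UNIV::'p set" 1] n_subsets[of "UNIV::'p set" 2] by simp
  also have "\<dots> = tau CARD('p)"
    by (simp add: tau_def numeral_2_eq_2)
  finally show ?thesis .
qed

lemma pair_code_exists:
  assumes "CARD('m::finite) < tau CARD('p::finite)"
  shows "\<exists>(\<iota>::'m \<Rightarrow> 'p \<times> 'p) (q::'p \<times> 'p).
           (\<forall>i j. upair (\<iota> i) = upair (\<iota> j) \<longrightarrow> i = j) \<and> (\<forall>i. upair (\<iota> i) \<noteq> upair q)"
proof -
  let ?Q = "range (upair :: ('p \<times> 'p) \<Rightarrow> 'p set)"
  have "card (UNIV::'m set) \<le> card ?Q" using assms card_upairs[where 'p='p] by simp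
  then obtain g where g: "g ` UNIV \<subseteq> ?Q" "inj_on g (UNIV::'m set)"
    using card_le_inj[of "UNIV::'m set" ?Q] by auto
  have "card (g ` UNIV) < card ?Q"
    using assms card_upairs[where 'p='p] g(2) by (simp add: card_image)
  then obtain q0 where q0: "q0 \<in> ?Q" "q0 \<notin> g ` UNIV"
  proof -
    have "\<not> ?Q \<subseteq> g ` UNIV"
    proof
      assume "?Q \<subseteq> g ` UNIV"
      then have "card ?Q \<le> card (g ` UNIV)" by (intro card_mono) auto
      with \<open>card (g ` UNIV) < card ?Q\<close> show False by simp
    qed
    then show ?thesis using that by blast
  qed
  obtain q where q: "upair q = q0" using q0(1) by auto
  define \<iota> where "\<iota> i = (SOME x. upair x = g i)" for i
  have \<iota>: "upair (\<iota> i) = g i" for i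
  proof -
    have "g i \<in> range upair" using g(1) by auto
    then have "\<exists>x. upair x = g i" by (auto simp: image_def)
    then show ?thesis unfolding \<iota>_def by (rule someI_ex)
  qed
  show ?thesis
    apply (rule exI[of _ \<iota>], rule exI[of _ q])
    using \<iota> q q0(2) g(2) by (auto simp: inj_on_def)
qed

lemma EtX_row: "(transpose (Emat \<sigma>) ** X) $ a $ j = X $ \<sigma> a $ j"
proof -
  have "(transpose (Emat \<sigma>) ** X) $ a $ j = (\<Sum>i\<in>UNIV. if i = \<sigma> a then X $ i $ j else 0)"
    unfolding Emat_def transpose_def matrix_matrix_mult_def
    apply (simp only: vec_lambda_beta)
    by (intro sum.cong refl) auto
  then show ?thesis by simp
qed

lemma XE_col: "(X ** Emat \<sigma>) $ i $ b = X $ i $ \<sigma> b"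
proof -
  have "(X ** Emat \<sigma>) $ i $ b = (\<Sum>j\<in>UNIV. if j = \<sigma> b then X $ i $ j else 0)"
    unfolding Emat_def matrix_matrix_mult_def
    apply (simp only: vec_lambda_beta)
    by (intro sum.cong refl) auto
  then show ?thesis by simp
qed

lemma EtXE: "(transpose (Emat \<sigma>) ** X ** Emat \<sigma>) $ a $ b = X $ \<sigma> a $ \<sigma> b"
  by (simp add: XE_col EtX_row)

lemma symz_entry: "symz X $ i $ j = (X $ i $ j + X $ j $ i) / 2"
  by (simp add: symz_def transpose_def)

definition Dmat :: "('p \<Rightarrow> 'n) \<Rightarrow> real^'n^'n \<Rightarrow> real^'p^'p" where
  "Dmat \<sigma> N0 = transpose (Emat \<sigma>) ** symz N0 ** Emat \<sigma>"

lemma Dmat_entry: "Dmat \<sigma> N0 $ a $ b = (N0 $ \<sigma> a $ \<sigma> b + N0 $ \<sigma> b $ \<sigma> a) / 2"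
  by (simp add: Dmat_def EtXE symz_entry)

definition Hq :: "('p::finite \<Rightarrow> 'n::finite) \<Rightarrow> 'p \<times> 'p \<Rightarrow> 'm::finite \<Rightarrow> ((real^'n^'n)^'m) set" where
  "Hq \<sigma> q i0 = {N. Dmat \<sigma> (N $ i0) $ fst q $ snd q = 0}"

lemma negligible_Hq:
  fixes \<sigma> :: "'p::finite \<Rightarrow> 'n::finite" and i0 :: "'m::finite"
  shows "negligible (Hq \<sigma> q i0)"
proof -
  obtain a b where q: "q = (a, b)" by (cases q)
  let ?H = "Hq \<sigma> q i0"
  have sub: "subspace ?H"
    unfolding subspace_def Hq_def
    by (simp add: Dmat_entry q algebra_simps) (metis distrib_left mult_zero_right)
  define N1 :: "(real^'n^'n)^'m" where
    "N1 = (\<chi> i. if i = i0 then (\<chi> j l. if j = \<sigma> a \<and> l = \<sigma> b then 1 else 0) else 0)"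
  have "N1 \<notin> ?H"
    by (auto simp: Hq_def Dmat_entry q N1_def split: if_splits)
  moreover have "span ?H = ?H" using sub span_subspace[of ?H ?H] span_superset[of ?H] by blast
  ultimately have "span ?H \<noteq> UNIV" by (metis UNIV_I)
  then have "dim ?H < DIM((real^'n^'n)^'m)"
    using dim_eq_full[of ?H] dim_subset_UNIV[of ?H] by linarith
  then show ?thesis by (rule negligible_lowdim)
qed

lemma bilinear_mm: "bilinear (\<lambda>(A::real^'n^'m) (B::real^'p^'n). A ** B)"
  unfolding bilinear_def linear_iff
  by (simp add: matrix_add_ldistrib mm_add_r matrix_scalar_ac scalar_matrix_assoc)

lemma bb_mm: "bounded_bilinear (\<lambda>(A::real^'n^'m) (B::real^'p^'n). A ** B)"
  using bilinear_mm bilinear_conv_bounded_bilinear by blast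

lemma diff_mm:
  fixes f :: "'a::real_normed_vector \<Rightarrow> real^'n^'m" and g :: "'a \<Rightarrow> real^'p^'n"
  shows "f differentiable (at x) \<Longrightarrow> g differentiable (at x) \<Longrightarrow> (\<lambda>x. f x ** g x) differentiable (at x)"
  unfolding differentiable_def using bounded_bilinear.FDERIV[OF bb_mm] by blast

lemma diff_lin: "bounded_linear L \<Longrightarrow> f differentiable F \<Longrightarrow> (\<lambda>x. L (f x)) differentiable F"
  unfolding differentiable_def using bounded_linear.has_derivative by blast

lemma bl_transpose: "bounded_linear (transpose :: real^'n^'m \<Rightarrow> real^'m^'n)"
  by (rule linear_conv_bounded_linear[THEN iffD1])
     (simp add: linear_iff transpose_add transpose_scalar)

lemma diff_transpose:
  fixes f :: "'a::real_normed_vector \<Rightarrow> real^'n^'m"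
  shows "f differentiable F \<Longrightarrow> (\<lambda>x. transpose (f x)) differentiable F"
  using diff_lin[OF bl_transpose] .

lemma diff_symz:
  fixes f :: "'a::real_normed_vector \<Rightarrow> real^'n^'n"
  shows "f differentiable (at x) \<Longrightarrow> (\<lambda>x. symz (f x)) differentiable (at x)"
  unfolding symz_def by (intro differentiable_scaleR differentiable_const differentiable_add diff_transpose)

lemma diff_nth:
  shows "f differentiable F \<Longrightarrow> (\<lambda>x. f x $ i) differentiable F"
  using diff_lin[OF bounded_linear_vec_nth] .

lemma bl_axis: "bounded_linear (\<lambda>v::'a::euclidean_space. axis i v)"
  by (rule linear_conv_bounded_linear[THEN iffD1])
     (simp add: linear_iff axis_def vec_eq_iff)

lemma diff_axis:
  fixes f :: "'b::real_normed_vector \<Rightarrow> 'a::euclidean_space"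
  shows "f differentiable F \<Longrightarrow> (\<lambda>x. axis i (f x)) differentiable F"
  using diff_lin[OF bl_axis] .

definition Kof :: "('p \<Rightarrow> 'n) \<Rightarrow> real^'n^'n \<Rightarrow> real^'p^'n" where
  "Kof \<sigma> N0 = Pim \<sigma> ** symz N0 ** Emat \<sigma>"
definition Bof :: "('p \<Rightarrow> 'n) \<Rightarrow> real^'n^'n \<Rightarrow> real^'n^'n" where
  "Bof \<sigma> N0 = Pim \<sigma> ** symz N0 ** Pim \<sigma>"
definition coef :: "('p::finite \<Rightarrow> 'n::finite) \<Rightarrow> ('m \<Rightarrow> 'p \<times> 'p) \<Rightarrow> real^'n^'n \<Rightarrow> 'm \<Rightarrow> real" where
  "coef \<sigma> \<iota> N0 i = Dmat \<sigma> N0 $ fst (\<iota> i) $ snd (\<iota> i)"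
definition Zof :: "real^'n^'n \<Rightarrow> 'm::finite \<Rightarrow> ('p::finite \<Rightarrow> 'n::finite) \<Rightarrow> ('m \<Rightarrow> 'p \<times> 'p) \<Rightarrow> (real^'n^'n)^'m \<Rightarrow> real^'p^'n" where
  "Zof C i0 \<sigma> \<iota> N = coef \<sigma> \<iota> (N $ i0) i0 *\<^sub>R (C ** (Emat \<sigma> + Kof \<sigma> (N $ i0)))
      - (\<Sum>i\<in>-{i0}. coef \<sigma> \<iota> (N $ i0) i *\<^sub>R (symz (N $ i) ** (Emat \<sigma> + Kof \<sigma> (N $ i0))))"
definition hmap :: "real^'n^'n \<Rightarrow> 'm::finite \<Rightarrow> ('p::finite \<Rightarrow> 'n::finite) \<Rightarrow> ('m \<Rightarrow> 'p \<times> 'p) \<Rightarrow> (real^'n^'n)^'m \<Rightarrow> (real^'n^'n)^'m" where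
  "hmap C i0 \<sigma> \<iota> N = N + axis i0 ((N $ i0 - symz (N $ i0))
      + solveS \<sigma> (Bof \<sigma> (N $ i0)) (Kof \<sigma> (N $ i0)) (Zof C i0 \<sigma> \<iota> N) - N $ i0)"

lemma hmap_diff:
  fixes C :: "real^'n^'n" and i0 :: "'m::finite" and \<sigma> :: "'p::finite \<Rightarrow> 'n::finite"
    and N :: "(real^'n^'n)^'m"
  shows "hmap C i0 \<sigma> \<iota> differentiable (at N)"
proof -
  have dN0: "(\<lambda>N::(real^'n^'n)^'m. N $ i) differentiable (at N)" for i
    by (intro diff_nth differentiable_ident)
  have dS: "(\<lambda>N::(real^'n^'n)^'m. symz (N $ i)) differentiable (at N)" for i
    by (intro diff_symz dN0)
  have dK: "(\<lambda>N::(real^'n^'n)^'m. Kof \<sigma> (N $ i0)) differentiable (at N)"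
    unfolding Kof_def by (intro diff_mm dS differentiable_const)
  have dB: "(\<lambda>N::(real^'n^'n)^'m. Bof \<sigma> (N $ i0)) differentiable (at N)"
    unfolding Bof_def by (intro diff_mm dS differentiable_const)
  have dc: "(\<lambda>N::(real^'n^'n)^'m. coef \<sigma> \<iota> (N $ i0) i) differentiable (at N)" for i
    unfolding coef_def Dmat_def by (intro diff_nth diff_mm dS differentiable_const)
  have dY: "(\<lambda>N::(real^'n^'n)^'m. Emat \<sigma> + Kof \<sigma> (N $ i0)) differentiable (at N)"
    by (intro differentiable_add dK differentiable_const)
  have dZ: "Zof C i0 \<sigma> \<iota> differentiable (at N)"
    unfolding Zof_def
    by (intro differentiable_diff differentiable_scaleR dc diff_mm differentiable_const dY
        differentiable_sum ballI finite) (auto intro: dS)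
  have dSol: "(\<lambda>N. solveS \<sigma> (Bof \<sigma> (N $ i0)) (Kof \<sigma> (N $ i0)) (Zof C i0 \<sigma> \<iota> N)) differentiable (at N)"
    unfolding solveS_def Let_def
    by (intro differentiable_add differentiable_diff diff_mm diff_transpose dB dK dZ differentiable_const)
  show ?thesis
    unfolding hmap_def[abs_def]
    by (intro differentiable_add differentiable_diff diff_axis dSol dS dN0 differentiable_ident)
qed

lemma negligible_piece:
  fixes C :: "real^'n^'n" and i0 :: "'m::finite" and \<sigma> :: "'p::finite \<Rightarrow> 'n::finite"
  shows "negligible (hmap C i0 \<sigma> \<iota> ` Hq \<sigma> q i0)"
  by (rule negligible_differentiable_image_negligible)
     (auto intro: negligible_Hq differentiable_at_imp_differentiable_on hmap_diff)

definition Pm :: "'p \<times> 'p \<Rightarrow> real^'p^'p" where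
  "Pm x = (\<chi> a b. if upair (a, b) = upair x then 1 else 0)"

lemma Pm_sym: "transpose (Pm x) = Pm x"
  by (auto simp: Pm_def transpose_def vec_eq_iff upair_def insert_commute)

lemma mm_sum_r: "finite I \<Longrightarrow> (\<Sum>i\<in>I. f i) ** (Y::real^'p^'n) = (\<Sum>i\<in>I. f i ** (Y::real^'p^'n))"
  for f :: "'i \<Rightarrow> real^'n^'k"
  by (induction I rule: finite_induct) (auto simp: mm_add_r)

lemma transpose_sum: "finite I \<Longrightarrow> transpose (\<Sum>i\<in>I. f i) = (\<Sum>i\<in>I. transpose (f i :: real^'n^'k))"
  by (induction I rule: finite_induct) (auto simp: transpose_add transpose_def vec_eq_iff)

lemma symz_add: "symz (A + B) = symz A + symz B"
  by (simp add: symz_def transpose_add algebra_simps)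
lemma symz_sym: "transpose A = A \<Longrightarrow> symz A = A"
  by (simp add: symz_def scaleR_2[symmetric])
lemma symz_transpose: "transpose (symz A) = symz A"
  by (simp add: symz_def transpose_add transpose_scalar add.commute)
lemma symz_anti: "symz (A - symz A) = 0"
  by (simp add: symz_def transpose_diff transpose_add transpose_scalar algebra_simps scaleR_2[symmetric])

lemma hmap_surj:
  fixes C :: "real^'n^'n" and M :: "(real^'n^'n)^'m" and lam :: "real^'m"
    and K :: "real^'p^'n" and \<sigma> :: "'p::finite \<Rightarrow> 'n::finite" and \<iota> :: "'m::finite \<Rightarrow> 'p \<times> 'p"
    and q :: "'p \<times> 'p" and i0 :: 'm
  assumes inj: "inj \<sigma>"
    and \<iota>inj: "\<forall>i j. upair (\<iota> i) = upair (\<iota> j) \<longrightarrow> i = j"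
    and qsp: "\<forall>i. upair (\<iota> i) \<noteq> upair q"
    and Csym: "transpose C = C" and li0: "lam $ i0 \<noteq> 0" and PK: "Pim \<sigma> ** K = K"
    and eq: "(C - (\<Sum>i\<in>UNIV. lam $ i *\<^sub>R symz (M $ i))) ** (Emat \<sigma> + K) = 0"
  shows "M \<in> hmap C i0 \<sigma> \<iota> ` Hq \<sigma> q i0"
proof -
  define E where "E = Emat \<sigma>"
  define P where "P = Pim \<sigma>"
  define Y where "Y = E + K"
  define SM where "SM = symz (M $ i0)"
  define AM where "AM = M $ i0 - SM"
  define BM where "BM = P ** SM ** P"
  define val where "val i = (if i = i0 then 1 / lam $ i0 else lam $ i / lam $ i0)" for i
  define D where "D = (\<Sum>i\<in>UNIV. val i *\<^sub>R Pm (\<iota> i))"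
  define T where "T = BM + K ** transpose E + E ** transpose K + E ** D ** transpose E"
  define N0 where "N0 = AM + T"
  define N where "N = M + axis i0 (N0 - M $ i0)"
  have EtE': "X ** transpose E ** E = X" for X :: "real^'p^'k"
    by (metis E_def EtE inj matrix_mul_assoc matrix_mul_rid)
  have PE': "X ** P ** E = 0" for X :: "real^'n^'k"
    by (metis E_def P_def PE matrix_mul_assoc times0_right)
  have EtP': "X ** transpose E ** P = 0" for X :: "real^'p^'k"
    by (metis E_def P_def EtP matrix_mul_assoc times0_right)
  have PP': "X ** P ** P = X ** P" for X :: "real^'n^'k"
    by (metis P_def PP matrix_mul_assoc)
  have PK': "X ** P ** K = X ** K" for X :: "real^'n^'k"
    by (metis P_def PK matrix_mul_assoc)
  have EtK: "transpose E ** K = 0"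
    by (metis E_def EtP PK matrix_mul_assoc times0_left)
  have EtK': "X ** transpose E ** K = 0" for X :: "real^'p^'k"
    by (metis EtK matrix_mul_assoc times0_right)
  have KtE: "transpose K ** E = 0"
  proof -
    have "transpose K ** E = transpose (transpose E ** K)"
      by (simp add: matrix_transpose_mul)
    also have "\<dots> = 0" by (simp only: EtK) (simp add: transpose_def vec_eq_iff)
    finally show ?thesis .
  qed
  have KtE': "X ** transpose K ** E = 0" for X :: "real^'p^'k"
    by (metis KtE matrix_mul_assoc times0_right)
  have EtE: "transpose E ** E = mat 1" using EtE[OF inj] by (simp add: E_def)
  have PEz: "P ** E = 0" by (simp add: P_def E_def PE)
  have EtPz: "transpose E ** P = 0" by (simp add: P_def E_def EtP)
  have PPz: "P ** P = P" by (simp add: P_def PP)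
  note simps = matrix_mul_assoc matrix_add_ldistrib mm_add_r EtE' PE' EtP' PP' PK' EtK' KtE'
    EtE PEz EtPz PPz PK[folded P_def] EtK KtE times0_left times0_right add_0_left add_0_right
    matrix_mul_lid matrix_mul_rid
  (* symmetry facts *)
  have SMt: "transpose SM = SM" by (simp add: SM_def symz_transpose)
  have Pt': "transpose P = P" by (simp add: P_def Pt)
  have Dt: "transpose D = D"
    by (simp add: D_def transpose_sum transpose_scalar Pm_sym)
  have Tt: "transpose T = T"
    by (simp add: T_def BM_def transpose_add matrix_transpose_mul SMt Pt' Dt matrix_mul_assoc add_ac)
  have symN0: "symz N0 = T"
    by (simp add: N0_def AM_def SM_def symz_add symz_anti symz_sym[OF Tt])
  (* decoding *)
  have Dm: "Dmat \<sigma> N0 = D"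
    unfolding Dmat_def symN0 E_def[symmetric] T_def BM_def by (simp only: simps)
  have Ko: "Kof \<sigma> N0 = K"
    unfolding Kof_def symN0 E_def[symmetric] P_def[symmetric] T_def BM_def by (simp only: simps)
  have Bo: "Bof \<sigma> N0 = BM"
    unfolding Bof_def symN0 E_def[symmetric] P_def[symmetric] T_def BM_def by (simp only: simps)
  have Dentry: "D $ fst x $ snd x = (\<Sum>i\<in>UNIV. if upair x = upair (\<iota> i) then val i else 0)" for x
    by (simp add: D_def Pm_def sum_component) (rule sum.cong, auto)
  have co: "coef \<sigma> \<iota> N0 i = val i" for i
  proof -
    have "coef \<sigma> \<iota> N0 i = (\<Sum>j\<in>UNIV. if j = i then val j else 0)"
      unfolding coef_def Dm Dentry using \<iota>inj by (intro sum.cong refl) auto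
    then show ?thesis by simp
  qed
  have N0i: "N $ i0 = N0" by (simp add: N_def)
  have Ni: "i \<noteq> i0 \<Longrightarrow> N $ i = M $ i" for i by (simp add: N_def axis_def)
  have inH: "N \<in> Hq \<sigma> q i0"
  proof -
    have "(\<Sum>i\<in>UNIV. if upair q = upair (\<iota> i) then val i else 0) = 0"
      using qsp by (intro sum.neutral) auto
    then show ?thesis unfolding Hq_def by (simp add: N0i Dm Dentry)
  qed
  (* Z *)
  have Z: "Zof C i0 \<sigma> \<iota> N = SM ** Y"
  proof -
    have split: "(\<Sum>i\<in>UNIV. lam $ i *\<^sub>R symz (M $ i)) = lam $ i0 *\<^sub>R SM + (\<Sum>i\<in>-{i0}. lam $ i *\<^sub>R symz (M $ i))"
      by (simp add: SM_def sum.remove[of UNIV i0] Compl_eq_Diff_UNIV)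
    have "C ** Y = (\<Sum>i\<in>UNIV. lam $ i *\<^sub>R symz (M $ i)) ** Y"
      using eq by (simp add: Y_def E_def mm_diff_r)
    also have "\<dots> = lam $ i0 *\<^sub>R (SM ** Y) + (\<Sum>i\<in>-{i0}. lam $ i *\<^sub>R (symz (M $ i) ** Y))"
      by (simp add: split mm_add_r mm_sum_r scalar_matrix_assoc)
    finally have CY: "C ** Y = lam $ i0 *\<^sub>R (SM ** Y) + (\<Sum>i\<in>-{i0}. lam $ i *\<^sub>R (symz (M $ i) ** Y))" .
    have "Zof C i0 \<sigma> \<iota> N = val i0 *\<^sub>R (C ** Y) - (\<Sum>i\<in>-{i0}. val i *\<^sub>R (symz (M $ i) ** Y))"
      unfolding Zof_def N0i Ko co Y_def E_def
      by (intro arg_cong2[where f = minus] refl sum.cong) (auto simp: Ni)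
    also have "\<dots> = SM ** Y"
    proof -
      let ?S = "(\<Sum>i\<in>-{i0}. lam $ i *\<^sub>R (symz (M $ i) ** Y))"
      have s1: "(\<Sum>i\<in>-{i0}. val i *\<^sub>R (symz (M $ i) ** Y)) = (1 / lam $ i0) *\<^sub>R ?S"
        unfolding scaleR_sum_right by (intro sum.cong refl) (auto simp: val_def)
      have s2: "val i0 *\<^sub>R (C ** Y) = SM ** Y + (1 / lam $ i0) *\<^sub>R ?S"
        unfolding CY val_def using li0 by (simp add: scaleR_add_right)
      show ?thesis unfolding s1 s2 by simp
    qed
    finally show ?thesis .
  qed
  have sol: "solveS \<sigma> BM K (SM ** Y) = SM"
    using solve_unique[OF inj SMt PK] by (simp add: BM_def P_def Y_def E_def)
  have "hmap C i0 \<sigma> \<iota> N = M"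
  proof -
    have "hmap C i0 \<sigma> \<iota> N = N + axis i0 (AM + SM - N0)"
      unfolding hmap_def N0i symN0 Bo Ko Z sol by (simp add: N0_def)
    also have "\<dots> = M"
      by (simp add: N_def vec_eq_iff axis_def AM_def)
    finally show ?thesis .
  qed
  then show ?thesis using inH by (metis image_eqI)
qed

lemma Pim_K: "(\<forall>k. K $ \<sigma> k = 0) \<Longrightarrow> Pim \<sigma> ** K = K"
proof -
  assume z: "\<forall>k. K $ \<sigma> k = 0"
  have "(Pim \<sigma> ** K) $ j $ l = (\<Sum>i\<in>UNIV. if i = j then (if j \<notin> range \<sigma> then K $ j $ l else 0) else 0)" for j l
    unfolding Pim_def matrix_matrix_mult_def
    apply (simp only: vec_lambda_beta)
    by (intro sum.cong refl) auto
  then show ?thesis using z by (auto simp: vec_eq_iff)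
qed

theorem theorem5:
  fixes C :: "real^'n^'n" and b :: "real^'m" and E :: "'m set"
  assumes "tau CARD('p) > CARD('m)"
      and "symmetric_mat C"
      and "int (rank C) > int CARD('n) - int CARD('p)"
  shows "negligible {M :: (real^'n^'n)^'m.
           \<not> ((feas (\<lambda>i. symz (M $ i)) b E \<noteq> {} \<and>
               (\<exists>X0\<in>feas (\<lambda>i. symz (M $ i)) b E. \<forall>X\<in>feas (\<lambda>i. symz (M $ i)) b E. frob C X0 \<le> frob C X))
              \<longrightarrow> (\<forall>Y::real^'p^'n. two_critical C (\<lambda>i. symz (M $ i)) b E Y
                      \<longrightarrow> BM_global_min C (\<lambda>i. symz (M $ i)) b E Y))}"
proof -
  obtain \<iota> :: "'m \<Rightarrow> 'p \<times> 'p" and q :: "'p \<times> 'p" where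
    \<iota>inj: "\<forall>i j. upair (\<iota> i) = upair (\<iota> j) \<longrightarrow> i = j" and qsp: "\<forall>i. upair (\<iota> i) \<noteq> upair q"
    using pair_code_exists[OF assms(1)] by blast
  have Csym: "transpose C = C" using assms(2) by (simp add: symmetric_mat_def)
  let ?F = "(\<lambda>(i0, \<sigma>). hmap C i0 \<sigma> \<iota> ` Hq \<sigma> q i0) ` (UNIV :: ('m \<times> ('p \<Rightarrow> 'n)) set)"
  have negU: "negligible (\<Union> ?F)"
    by (rule negligible_Union) (auto intro: negligible_piece)
  have sub: "{M :: (real^'n^'n)^'m.
           \<not> ((feas (\<lambda>i. symz (M $ i)) b E \<noteq> {} \<and>
               (\<exists>X0\<in>feas (\<lambda>i. symz (M $ i)) b E. \<forall>X\<in>feas (\<lambda>i. symz (M $ i)) b E. frob C X0 \<le> frob C X))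
              \<longrightarrow> (\<forall>Y::real^'p^'n. two_critical C (\<lambda>i. symz (M $ i)) b E Y
                      \<longrightarrow> BM_global_min C (\<lambda>i. symz (M $ i)) b E Y))} \<subseteq> \<Union> ?F"
  proof
    fix M :: "(real^'n^'n)^'m"
    assume "M \<in> {M :: (real^'n^'n)^'m.
           \<not> ((feas (\<lambda>i. symz (M $ i)) b E \<noteq> {} \<and>
               (\<exists>X0\<in>feas (\<lambda>i. symz (M $ i)) b E. \<forall>X\<in>feas (\<lambda>i. symz (M $ i)) b E. frob C X0 \<le> frob C X))
              \<longrightarrow> (\<forall>Y::real^'p^'n. two_critical C (\<lambda>i. symz (M $ i)) b E Y
                      \<longrightarrow> BM_global_min C (\<lambda>i. symz (M $ i)) b E Y))}"
    then obtain Y :: "real^'p^'n" where tc: "two_critical C (\<lambda>i. symz (M $ i)) b E Y"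
      and nm: "\<not> BM_global_min C (\<lambda>i. symz (M $ i)) b E Y" by blast
    obtain lam where SY: "Smat C (\<lambda>i. symz (M $ i)) lam ** Y = 0"
      and inj: "\<forall>e. Y *v e = 0 \<longrightarrow> e = 0"
      using crit_structure[OF tc nm] by blast
    have "\<exists>i0. lam $ i0 \<noteq> 0"
    proof (rule ccontr)
      assume "\<not> (\<exists>i0. lam $ i0 \<noteq> 0)"
      then have "Smat C (\<lambda>i. symz (M $ i)) lam = C" by (simp add: Smat_def)
      then have "C ** Y = 0" using SY by simp
      then have "rank C + CARD('p) \<le> CARD('n)" using rank_kernel_bound[OF inj] by blast
      then show False using assms(3) by linarith
    qed
    then obtain i0 where li0: "lam $ i0 \<noteq> 0" by blast
    obtain \<sigma> :: "'p \<Rightarrow> 'n" where injs: "inj \<sigma>" and invG: "invertible (\<chi> k. Y $ \<sigma> k)"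
      using chart_exists[OF inj] by blast
    define G :: "real^'p^'p" where "G = (\<chi> k. Y $ \<sigma> k)"
    obtain Gi where GGi: "G ** Gi = mat 1" using invG unfolding G_def[symmetric] invertible_def by blast
    define Y' where "Y' = Y ** Gi"
    define K where "K = Y' - Emat \<sigma>"
    have rowY': "Y' $ \<sigma> k = Emat \<sigma> $ \<sigma> k" for k
    proof -
      have "Y' $ \<sigma> k = (G ** Gi) $ k"
        by (simp add: Y'_def G_def matrix_matrix_mult_def)
      also have "\<dots> = mat 1 $ k" using GGi by simp
      also have "\<dots> = Emat \<sigma> $ \<sigma> k"
        by (auto simp: mat_def Emat_def vec_eq_iff inj_eq[OF injs])
      finally show ?thesis .
    qed
    have PK: "Pim \<sigma> ** K = K"
      by (rule Pim_K) (simp add: K_def rowY')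
    have eq: "(C - (\<Sum>i\<in>UNIV. lam $ i *\<^sub>R symz (M $ i))) ** (Emat \<sigma> + K) = 0"
    proof -
      have "Emat \<sigma> + K = Y ** Gi" by (simp add: K_def Y'_def)
      then show ?thesis using SY unfolding Smat_def by (simp add: matrix_mul_assoc)
    qed
    have "M \<in> hmap C i0 \<sigma> \<iota> ` Hq \<sigma> q i0"
      by (rule hmap_surj[OF injs \<iota>inj qsp Csym li0 PK eq])
    then show "M \<in> \<Union> ?F" by blast
  qed
  show ?thesis by (rule negligible_subset[OF negU sub])
qed

end
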